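(* On $\mathbb{R}^4$ let $H^1,H^2,H^3$ be constant-coefficient 2-forms with $H^i\wedge H^j=2\delta^{ij}\,\mathrm{vol}$ for a nonvanishing constant 4-form $\mathrm{vol}$, let $M>0$ be a constant, let $a^i$ ($i=1,2,3$) be smooth 1-forms and $\Psi_{ij}$ smooth functions, symmetric and tracefree ($\delta^{ij}\Psi_{ij}=0$). Define the Lagrangian 4-form $$L=\Psi_{ij}\left(M^2H^i\wedge da^j+\tfrac12\,da^i\wedge da^j\right).$$ For an arbitrary smooth vector field $\eta$ and arbitrary smooth functions $\xi^i$, consider the infinitesimal transformation $$\delta a^i=d\xi^i+i_\eta\big(M^2H^i+da^i\big),\qquad \delta\Psi_{ij}=i_\eta d\Psi_{ij}.$$ Then the first-order variation $\delta L$ is an exact 4-form; explicitly $\delta L=d\,(i_\eta L)$. In particular the action $\int L$ is invariant up to boundary terms.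
   Context: $i_\eta$ denotes interior product with the vector field $\eta$. *)

theory Defs
  imports "HOL-Analysis.Analysis" "HOL-Library.Function_Algebras"
begin

text \<open>A (mixed-degree) form is given by its
coefficient function: omega x I is the coefficient of dx^I = dx^(i1) wedge ... wedge dx^(ik)
at the point x, where I = {i1 < ... < ik} is a set of coordinate indices (of type 4).\<close>

type_synonym form = "real^4 \<Rightarrow> 4 set \<Rightarrow> real"

text \<open>Sign of the shuffle: dx^I wedge dx^J = shuffle_sign I J * dx^(I union J) for disjoint I, J.\<close>
definition shuffle_sign :: "4 set \<Rightarrow> 4 set \<Rightarrow> real" where
  "shuffle_sign I J = (-1) ^ card {(i, j). i \<in> I \<and> j \<in> J \<and> j < i}"

definition wedge :: "form \<Rightarrow> form \<Rightarrow> form" where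
  "wedge \<alpha> \<beta> x K = (\<Sum>I\<in>Pow K. shuffle_sign I (K - I) * \<alpha> x I * \<beta> x (K - I))"

definition partial :: "4 \<Rightarrow> (real^4 \<Rightarrow> real) \<Rightarrow> real^4 \<Rightarrow> real" where
  "partial k f x = frechet_derivative f (at x) (axis k 1)"

definition extd :: "form \<Rightarrow> form" where
  "extd \<omega> x K = (\<Sum>k\<in>K. shuffle_sign {k} (K - {k}) * partial k (\<lambda>y. \<omega> y (K - {k})) x)"

definition int_prod :: "(real^4 \<Rightarrow> real^4) \<Rightarrow> form \<Rightarrow> form" where
  "int_prod \<eta> \<omega> x I = (\<Sum>k\<in>- I. shuffle_sign {k} I * (\<eta> x $ k) * \<omega> x (insert k I))"

definition smul :: "(real^4 \<Rightarrow> real) \<Rightarrow> form \<Rightarrow> form" where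
  "smul f \<omega> x I = f x * \<omega> x I"

definition zero_form :: "(real^4 \<Rightarrow> real) \<Rightarrow> form" where
  "zero_form f x I = (if I = {} then f x else 0)"

definition is_kform :: "nat \<Rightarrow> form \<Rightarrow> bool" where
  "is_kform k \<omega> \<longleftrightarrow> (\<forall>x I. card I \<noteq> k \<longrightarrow> \<omega> x I = 0)"

definition constant_form :: "form \<Rightarrow> bool" where
  "constant_form \<omega> \<longleftrightarrow> (\<forall>x y. \<omega> x = \<omega> y)"

fun iter_partial :: "4 list \<Rightarrow> (real^4 \<Rightarrow> real) \<Rightarrow> real^4 \<Rightarrow> real" where
  "iter_partial [] f = f"
| "iter_partial (k # ks) f = partial k (iter_partial ks f)"

definition smooth_fun :: "(real^4 \<Rightarrow> real) \<Rightarrow> bool" where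
  "smooth_fun f \<longleftrightarrow> (\<forall>ks x. iter_partial ks f differentiable (at x))"

definition smooth_form :: "form \<Rightarrow> bool" where
  "smooth_form \<omega> \<longleftrightarrow> (\<forall>I. smooth_fun (\<lambda>x. \<omega> x I))"

definition smooth_vf :: "(real^4 \<Rightarrow> real^4) \<Rightarrow> bool" where
  "smooth_vf \<eta> \<longleftrightarrow> (\<forall>k. smooth_fun (\<lambda>x. \<eta> x $ k))"

definition Lag :: "real \<Rightarrow> (3 \<Rightarrow> form) \<Rightarrow> (3 \<Rightarrow> form) \<Rightarrow> (3 \<Rightarrow> 3 \<Rightarrow> real^4 \<Rightarrow> real) \<Rightarrow> form" where
  "Lag M H a \<Psi> = (\<Sum>i\<in>UNIV. \<Sum>j\<in>UNIV. smul (\<Psi> i j)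
      (smul (\<lambda>_. M\<^sup>2) (wedge (H i) (extd (a j))) + smul (\<lambda>_. 1/2) (wedge (extd (a i)) (extd (a j)))))"

definition first_variation ::
  "real \<Rightarrow> (3 \<Rightarrow> form) \<Rightarrow> (3 \<Rightarrow> form) \<Rightarrow> (3 \<Rightarrow> 3 \<Rightarrow> real^4 \<Rightarrow> real)
    \<Rightarrow> (3 \<Rightarrow> form) \<Rightarrow> (3 \<Rightarrow> 3 \<Rightarrow> real^4 \<Rightarrow> real) \<Rightarrow> form" where
  "first_variation M H a \<Psi> \<delta>a \<delta>\<Psi> x K =
     deriv (\<lambda>\<epsilon>. Lag M H (\<lambda>i. a i + smul (\<lambda>_. \<epsilon>) (\<delta>a i))
                         (\<lambda>i j y. \<Psi> i j y + \<epsilon> * \<delta>\<Psi> i j y) x K) 0"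

end

theory Submission
  imports Defs
begin

definition dfb :: "(real^4 \<Rightarrow> real) \<Rightarrow> bool" where
  "dfb f \<longleftrightarrow> (\<forall>x. f differentiable (at x))"

lemma dfbD: "dfb f \<Longrightarrow> (f has_derivative frechet_derivative f (at x)) (at x)"
  unfolding dfb_def using frechet_derivative_works by blast

lemma partial_hd: "(f has_derivative f') (at x) \<Longrightarrow> partial k f x = f' (axis k 1)"
  unfolding partial_def using frechet_derivative_at by metis

lemma iter_partial_snoc: "iter_partial ks (partial k f) = iter_partial (ks @ [k]) f"
  by (induction ks) auto

lemma smooth_partial: "smooth_fun f \<Longrightarrow> smooth_fun (partial k f)"
  unfolding smooth_fun_def by (metis iter_partial_snoc)

lemma smooth_dfb: "smooth_fun f \<Longrightarrow> dfb f"
  unfolding smooth_fun_def dfb_def by (metis iter_partial.simps(1))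

lemma smooth_dfb_partial: "smooth_fun f \<Longrightarrow> dfb (partial k f)"
  by (simp add: smooth_dfb smooth_partial)

lemma dfb_add[simp]: "dfb f \<Longrightarrow> dfb g \<Longrightarrow> dfb (\<lambda>y. f y + g y)"
  unfolding dfb_def by auto
lemma dfb_diff[simp]: "dfb f \<Longrightarrow> dfb g \<Longrightarrow> dfb (\<lambda>y. f y - g y)"
  unfolding dfb_def by auto
lemma dfb_mult[simp]: "dfb f \<Longrightarrow> dfb g \<Longrightarrow> dfb (\<lambda>y. f y * g y)"
  unfolding dfb_def by auto
lemma dfb_const[simp]: "dfb (\<lambda>y. c)"
  unfolding dfb_def by auto
lemma dfb_sum[simp]: "finite S \<Longrightarrow> (\<And>i. i \<in> S \<Longrightarrow> dfb (f i)) \<Longrightarrow> dfb (\<lambda>y. \<Sum>i\<in>S. f i y)"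
  unfolding dfb_def by (auto intro!: differentiable_sum)

lemma partial_add[simp]: "dfb f \<Longrightarrow> dfb g \<Longrightarrow> partial k (\<lambda>y. f y + g y) = (\<lambda>x. partial k f x + partial k g x)"
proof (rule ext)
  fix x assume "dfb f" "dfb g"
  then have hd: "((\<lambda>y. f y + g y) has_derivative (\<lambda>h. frechet_derivative f (at x) h + frechet_derivative g (at x) h)) (at x)"
    by (intro has_derivative_add dfbD)
  show "partial k (\<lambda>y. f y + g y) x = partial k f x + partial k g x"
    using partial_hd[OF hd, of k] unfolding partial_def by simp
qed
lemma partial_diff[simp]: "dfb f \<Longrightarrow> dfb g \<Longrightarrow> partial k (\<lambda>y. f y - g y) = (\<lambda>x. partial k f x - partial k g x)"
proof (rule ext)
  fix x assume "dfb f" "dfb g"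
  then have hd: "((\<lambda>y. f y - g y) has_derivative (\<lambda>h. frechet_derivative f (at x) h - frechet_derivative g (at x) h)) (at x)"
    by (intro has_derivative_diff dfbD)
  show "partial k (\<lambda>y. f y - g y) x = partial k f x - partial k g x"
    using partial_hd[OF hd, of k] unfolding partial_def by simp
qed
lemma partial_mult[simp]: "dfb f \<Longrightarrow> dfb g \<Longrightarrow> partial k (\<lambda>y. f y * g y) = (\<lambda>x. partial k f x * g x + f x * partial k g x)"
proof (rule ext)
  fix x assume "dfb f" "dfb g"
  then have hd: "((\<lambda>y. f y * g y) has_derivative (\<lambda>h. f x * frechet_derivative g (at x) h + frechet_derivative f (at x) h * g x)) (at x)"
    by (intro has_derivative_mult dfbD)
  show "partial k (\<lambda>y. f y * g y) x = partial k f x * g x + f x * partial k g x"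
    using partial_hd[OF hd, of k] unfolding partial_def by simp
qed
lemma partial_const[simp]: "partial k (\<lambda>y. c) = (\<lambda>x. 0)"
proof (rule ext)
  fix x
  have hd: "((\<lambda>y::real^4. c) has_derivative (\<lambda>h. 0)) (at x)" by simp
  show "partial k (\<lambda>y. c) x = 0" using partial_hd[OF hd, of k] by simp
qed
lemma partial_sum[simp]: "(\<And>i. i \<in> S \<Longrightarrow> dfb (f i)) \<Longrightarrow>
   partial k (\<lambda>y. \<Sum>i\<in>S. f i y) = (\<lambda>x. \<Sum>i\<in>S. partial k (f i) x)"
proof (rule ext)
  fix x assume "\<And>i. i \<in> S \<Longrightarrow> dfb (f i)"
  then have hd: "((\<lambda>y. \<Sum>i\<in>S. f i y) has_derivative (\<lambda>h. \<Sum>i\<in>S. frechet_derivative (f i) (at x) h)) (at x)"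
    by (intro has_derivative_sum dfbD)
  show "partial k (\<lambda>y. \<Sum>i\<in>S. f i y) x = (\<Sum>i\<in>S. partial k (f i) x)"
    using partial_hd[OF hd, of k] unfolding partial_def by simp
qed

lemma line_deriv:
  assumes "dfb g"
  shows "((\<lambda>t. g (y + t *\<^sub>R v)) has_real_derivative frechet_derivative g (at (y + t *\<^sub>R v)) v) (at t)"
proof -
  have g: "(g has_derivative frechet_derivative g (at (y + t *\<^sub>R v))) (at (y + t *\<^sub>R v))"
    using assms dfbD by blast
  have l: "((\<lambda>t. y + t *\<^sub>R v) has_derivative (\<lambda>h. h *\<^sub>R v)) (at t)"
    by (auto intro!: derivative_eq_intros)
  have "((\<lambda>t. g (y + t *\<^sub>R v)) has_derivative (\<lambda>h. frechet_derivative g (at (y + t *\<^sub>R v)) (h *\<^sub>R v))) (at t)"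
    using has_derivative_compose[OF l g] by (simp add: o_def)
  moreover have "linear (frechet_derivative g (at (y + t *\<^sub>R v)))"
    using g has_derivative_linear by blast
  moreover have "(\<lambda>h. frechet_derivative g (at (y + t *\<^sub>R v)) (h *\<^sub>R v)) = (*) (frechet_derivative g (at (y + t *\<^sub>R v)) v)"
    using calculation(2) by (auto simp: linear_scale mult.commute)
  ultimately show ?thesis
    unfolding has_field_derivative_def by simp
qed

lemma mvt_line:
  assumes "dfb g" "0 < h"
  shows "\<exists>t>0. t < h \<and> g (y + h *\<^sub>R v) - g y = h * frechet_derivative g (at (y + t *\<^sub>R v)) v"
proof -
  have "\<exists>z>0. z < h \<and> g (y + h *\<^sub>R v) - g (y + 0 *\<^sub>R v) = (h - 0) * frechet_derivative g (at (y + z *\<^sub>R v)) v"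
    by (rule MVT2[where f="\<lambda>t. g (y + t *\<^sub>R v)"]) (use assms line_deriv in auto)
  then show ?thesis by simp
qed

lemma dfb_shift: "dfb f \<Longrightarrow> dfb (\<lambda>y. f (y + c))"
  unfolding dfb_def
proof
  fix x assume "\<forall>x. f differentiable at x"
  moreover have "(\<lambda>y. y + c) differentiable at x" by (auto intro!: differentiable_add)
  ultimately show "(\<lambda>y. f (y + c)) differentiable at x"
    using differentiable_chain_at[of "\<lambda>y. y + c" x f] by (simp add: o_def)
qed

lemma schwarz:
  assumes sf: "smooth_fun f"
  shows "partial p (partial q f) x = partial q (partial p f) x"
proof (rule ccontr)
  assume ne: "partial p (partial q f) x \<noteq> partial q (partial p f) x"
  define A where "A = partial q (partial p f)"
  define B where "B = partial p (partial q f)"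
  define ep where "ep = (axis p 1 :: real^4)"
  define eq where "eq = (axis q 1 :: real^4)"
  define d where "d = \<bar>A x - B x\<bar>"
  have dpos: "d > 0" using ne unfolding d_def A_def B_def by auto
  have dfA: "dfb A" "dfb B" unfolding A_def B_def using sf
    by (simp_all add: smooth_dfb_partial smooth_partial)
  have df: "dfb f" "dfb (partial p f)" "dfb (partial q f)" using sf
    by (simp_all add: smooth_dfb smooth_dfb_partial)
  have cA: "continuous (at x) A" "continuous (at x) B" using dfA
    unfolding dfb_def by (auto intro: differentiable_imp_continuous_within)
  obtain e1 where e1: "e1 > 0" "\<And>z. dist z x < e1 \<Longrightarrow> dist (A z) (A x) < d/2"
    using cA(1) dpos unfolding continuous_at_eps_delta by (meson half_gt_zero)
  obtain e2 where e2: "e2 > 0" "\<And>z. dist z x < e2 \<Longrightarrow> dist (B z) (B x) < d/2"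
    using cA(2) dpos unfolding continuous_at_eps_delta by (meson half_gt_zero)
  define h where "h = min e1 e2 / 4"
  have hpos: "h > 0" using e1 e2 by (simp add: h_def)
  define \<Delta> where "\<Delta> = f (x + h *\<^sub>R ep + h *\<^sub>R eq) - f (x + h *\<^sub>R ep) - f (x + h *\<^sub>R eq) + f x"
  have nrm: "dist (x + t *\<^sub>R u + s *\<^sub>R w) x < min e1 e2"
    if "0 < t" "t < h" "0 < s" "s < h" "norm u = 1" "norm w = 1" for t s and u w :: "real^4"
  proof -
    have "dist (x + t *\<^sub>R u + s *\<^sub>R w) x = norm (t *\<^sub>R u + s *\<^sub>R w)" by (simp add: dist_norm)
    also have "\<dots> \<le> norm (t *\<^sub>R u) + norm (s *\<^sub>R w)" by (rule norm_triangle_ineq)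
    also have "\<dots> = t + s" using that by simp
    also have "\<dots> < min e1 e2" using that hpos unfolding h_def by linarith
    finally show ?thesis .
  qed
  have "\<exists>z. dist z x < min e1 e2 \<and> \<Delta> = h * h * A z"
  proof -
    define \<phi> where "\<phi> = (\<lambda>y. f (y + h *\<^sub>R eq) - f y)"
    have dphi: "dfb \<phi>" unfolding \<phi>_def using df(1) dfb_shift dfb_diff by blast
    obtain t where t: "0 < t" "t < h" "\<phi> (x + h *\<^sub>R ep) - \<phi> x = h * frechet_derivative \<phi> (at (x + t *\<^sub>R ep)) ep"
      using mvt_line[OF dphi hpos] by blast
    have "((\<lambda>y. f (y + h *\<^sub>R eq)) has_derivative frechet_derivative f (at (x + t *\<^sub>R ep + h *\<^sub>R eq))) (at (x + t *\<^sub>R ep))"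
    proof -
      have lin: "((\<lambda>y. y + h *\<^sub>R eq) has_derivative (\<lambda>v. v)) (at (x + t *\<^sub>R ep))"
        by (auto intro!: derivative_eq_intros)
      show ?thesis using has_derivative_compose[OF lin dfbD[OF df(1)]] by simp
    qed
    then have "(\<phi> has_derivative (\<lambda>v. frechet_derivative f (at (x + t *\<^sub>R ep + h *\<^sub>R eq)) v - frechet_derivative f (at (x + t *\<^sub>R ep)) v)) (at (x + t *\<^sub>R ep))"
      unfolding \<phi>_def by (intro has_derivative_diff dfbD[OF df(1)])
    then have "frechet_derivative \<phi> (at (x + t *\<^sub>R ep)) ep = partial p f (x + t *\<^sub>R ep + h *\<^sub>R eq) - partial p f (x + t *\<^sub>R ep)"
      using partial_hd[of \<phi> _ "x + t *\<^sub>R ep" p] unfolding partial_def ep_def by simp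
    moreover obtain s where s: "0 < s" "s < h" "partial p f (x + t *\<^sub>R ep + h *\<^sub>R eq) - partial p f (x + t *\<^sub>R ep)
        = h * frechet_derivative (partial p f) (at (x + t *\<^sub>R ep + s *\<^sub>R eq)) eq"
      using mvt_line[OF df(2) hpos, of "x + t *\<^sub>R ep" eq] by auto
    moreover have "\<Delta> = \<phi> (x + h *\<^sub>R ep) - \<phi> x" unfolding \<Delta>_def \<phi>_def by (simp add: algebra_simps)
    ultimately have "\<Delta> = h * h * A (x + t *\<^sub>R ep + s *\<^sub>R eq)"
      using t unfolding A_def partial_def[of q] eq_def by simp
    moreover have "dist (x + t *\<^sub>R ep + s *\<^sub>R eq) x < min e1 e2"
      using nrm[OF t(1,2) s(1,2)] by (simp add: ep_def eq_def)
    ultimately show ?thesis by blast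
  qed
  then obtain z1 where z1: "dist z1 x < min e1 e2" "\<Delta> = h * h * A z1" by blast
  have "\<exists>z. dist z x < min e1 e2 \<and> \<Delta> = h * h * B z"
  proof -
    define \<phi> where "\<phi> = (\<lambda>y. f (y + h *\<^sub>R ep) - f y)"
    have dphi: "dfb \<phi>" unfolding \<phi>_def using df(1) dfb_shift dfb_diff by blast
    obtain t where t: "0 < t" "t < h" "\<phi> (x + h *\<^sub>R eq) - \<phi> x = h * frechet_derivative \<phi> (at (x + t *\<^sub>R eq)) eq"
      using mvt_line[OF dphi hpos] by blast
    have "((\<lambda>y. f (y + h *\<^sub>R ep)) has_derivative frechet_derivative f (at (x + t *\<^sub>R eq + h *\<^sub>R ep))) (at (x + t *\<^sub>R eq))"
    proof -
      have lin: "((\<lambda>y. y + h *\<^sub>R ep) has_derivative (\<lambda>v. v)) (at (x + t *\<^sub>R eq))"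
        by (auto intro!: derivative_eq_intros)
      show ?thesis using has_derivative_compose[OF lin dfbD[OF df(1)]] by simp
    qed
    then have "(\<phi> has_derivative (\<lambda>v. frechet_derivative f (at (x + t *\<^sub>R eq + h *\<^sub>R ep)) v - frechet_derivative f (at (x + t *\<^sub>R eq)) v)) (at (x + t *\<^sub>R eq))"
      unfolding \<phi>_def by (intro has_derivative_diff dfbD[OF df(1)])
    then have "frechet_derivative \<phi> (at (x + t *\<^sub>R eq)) eq = partial q f (x + t *\<^sub>R eq + h *\<^sub>R ep) - partial q f (x + t *\<^sub>R eq)"
      using partial_hd[of \<phi> _ "x + t *\<^sub>R eq" q] unfolding partial_def eq_def by simp
    moreover obtain s where s: "0 < s" "s < h" "partial q f (x + t *\<^sub>R eq + h *\<^sub>R ep) - partial q f (x + t *\<^sub>R eq)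
        = h * frechet_derivative (partial q f) (at (x + t *\<^sub>R eq + s *\<^sub>R ep)) ep"
      using mvt_line[OF df(3) hpos, of "x + t *\<^sub>R eq" ep] by auto
    moreover have "\<Delta> = \<phi> (x + h *\<^sub>R eq) - \<phi> x" unfolding \<Delta>_def \<phi>_def by (simp add: algebra_simps)
    ultimately have "\<Delta> = h * h * B (x + t *\<^sub>R eq + s *\<^sub>R ep)"
      using t unfolding B_def partial_def[of p] ep_def by simp
    moreover have "dist (x + t *\<^sub>R eq + s *\<^sub>R ep) x < min e1 e2"
      using nrm[OF t(1,2) s(1,2)] by (simp add: ep_def eq_def)
    ultimately show ?thesis by blast
  qed
  then obtain z2 where z2: "dist z2 x < min e1 e2" "\<Delta> = h * h * B z2" by blast
  have "A z1 = B z2" using z1(2) z2(2) hpos by simp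
  moreover have "\<bar>A z1 - A x\<bar> < d/2" using e1(2)[of z1] z1(1) by (simp add: dist_real_def)
  moreover have "\<bar>B z2 - B x\<bar> < d/2" using e2(2)[of z2] z2(1) by (simp add: dist_real_def)
  ultimately show False using d_def by arith
qed

lemmas o4 = less_bit0_def bit0.Rep_numeral bit0.Rep_1
lemma rep4: "Rep_bit0 (1::4) = 1" "Rep_bit0 (2::4) = 2" "Rep_bit0 (3::4) = 3" "Rep_bit0 (4::4) = 0"
  by (simp_all add: bit0.Rep_numeral bit0.Rep_1)
lemma n4: "(4::4) \<noteq> 1" "(4::4) \<noteq> 2" "(4::4) \<noteq> 3" "(1::4) \<noteq> 4" "(1::4) \<noteq> 2" "(1::4) \<noteq> 3" "(2::4) \<noteq> 4" "(2::4) \<noteq> 1" "(2::4) \<noteq> 3" "(3::4) \<noteq> 4" "(3::4) \<noteq> 1" "(3::4) \<noteq> 2"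
  by (simp_all only: Rep_bit0_inject[symmetric] rep4)

lemma sign_prod: "finite I \<Longrightarrow> finite J \<Longrightarrow> shuffle_sign I J = (\<Prod>i\<in>I. \<Prod>j\<in>J. if j < i then -1 else 1)"
proof -
  assume f: "finite I" "finite J"
  have "(\<Prod>i\<in>I. \<Prod>j\<in>J. if j < i then -1 else (1::real)) = (\<Prod>p\<in>I\<times>J. if snd p < fst p then -1 else 1)"
    by (simp add: prod.cartesian_product case_prod_beta)
  also have "\<dots> = (\<Prod>p\<in>(I\<times>J) \<inter> {p. snd p < fst p}. -1)"
    by (simp add: prod.If_cases f)
  also have "\<dots> = (-1) ^ card ((I\<times>J) \<inter> {p. snd p < fst p})" by simp
  also have "(I\<times>J) \<inter> {p. snd p < fst p} = {(i, j). i \<in> I \<and> j \<in> J \<and> j < i}" by auto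
  finally show ?thesis unfolding shuffle_sign_def by simp
qed

lemma ss_single: "shuffle_sign {p} {q} = (if q < p then -1 else 1)"
  by (simp add: sign_prod)
lemma ss_empty[simp]: "shuffle_sign {} J = 1" "shuffle_sign I {} = 1"
  by (simp_all add: shuffle_sign_def)
lemma ss_sq[simp]: "shuffle_sign I J * shuffle_sign I J = 1"
  unfolding shuffle_sign_def by (simp flip: power_add add: power_even_eq[symmetric])
lemma ss_swap: "p \<noteq> q \<Longrightarrow> shuffle_sign {p} {q} * shuffle_sign {q} {p} = -1"
  by (auto simp: ss_single neq_iff)

definition Wt :: "(4 set \<Rightarrow> real) \<Rightarrow> (4 set \<Rightarrow> real) \<Rightarrow> real" where
  "Wt u v = (\<Sum>I\<in>Pow UNIV. shuffle_sign I (UNIV - I) * u I * v (UNIV - I))"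

definition is2 :: "(4 set \<Rightarrow> real) \<Rightarrow> bool" where
  "is2 u \<longleftrightarrow> (\<forall>I. card I \<noteq> 2 \<longrightarrow> u I = 0)"

lemma two4: "{I::4 set. card I = 2} = {{4,1},{4,2},{4,3},{1,2},{1,3},{2,3}}"
proof (rule set_eqI, rule iffI)
  fix I :: "4 set" assume "I \<in> {I. card I = 2}"
  then obtain x y where "I = {x,y}" "x \<noteq> y" by (auto simp: card_2_iff)
  then show "I \<in> {{4,1},{4,2},{4,3},{1,2},{1,3},{2,3}}"
    using exhaust_4[of x] exhaust_4[of y] by (elim disjE) (simp_all add: n4 insert_commute)
qed (auto simp: n4)

lemma Wt_2: assumes "is2 u"
  shows "Wt u v = (\<Sum>I\<in>{{4,1},{4,2},{4,3},{1,2},{1,3},{2,3}}. shuffle_sign I (UNIV - I) * u I * v (UNIV - I))"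
proof -
  have "Wt u v = (\<Sum>I\<in>{I. card I = 2}. shuffle_sign I (UNIV - I) * u I * v (UNIV - I))"
    unfolding Wt_def using assms unfolding is2_def
    by (intro sum.mono_neutral_right) auto
  then show ?thesis by (simp only: two4)
qed

lemma signs6: "shuffle_sign {4::4,1} {2,3} = 1" "shuffle_sign {4::4,2} {1,3} = -1" "shuffle_sign {4::4,3} {1,2} = 1"
  "shuffle_sign {1::4,2} {4,3} = 1" "shuffle_sign {1::4,3} {4,2} = -1" "shuffle_sign {2::4,3} {4,1} = 1"
  by (simp_all add: sign_prod less_bit0_def rep4 n4)
lemma dist6: "{4::4,1} \<notin> {{4,2},{4,3},{1,2},{1,3},{2,3}}" "{4::4,2} \<notin> {{4,3},{1,2},{1,3},{2,3}}"
  "{4::4,3} \<notin> {{1,2},{1,3},{2,3}}" "{1::4,2} \<notin> {{1,3},{2,3}}" "{1::4,3} \<notin> {{2,3}}"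
  by (simp_all add: doubleton_eq_iff n4)
lemma compl6: "UNIV - {4,1} = {2::4,3}" "UNIV - {4,2} = {1::4,3}" "UNIV - {4,3} = {1::4,2}"
      "UNIV - {1,2} = {4::4,3}" "UNIV - {1,3} = {4::4,2}" "UNIV - {2,3} = {4::4,1}"
  unfolding UNIV_4 by (simp_all add: n4 insert_Diff_if insert_commute)

lemma Wt_F6: assumes "is2 u"
  shows "Wt u v = u {4,1} * v {2,3} - u {4,2} * v {1,3} + u {4,3} * v {1,2} + u {1,2} * v {4,3} - u {1,3} * v {4,2} + u {2,3} * v {4,1}"
  unfolding Wt_2[OF assms]
  apply (subst sum.insert, simp, (rule dist6 | simp))+
  apply (simp only: signs6 compl6 sum.empty)
  done
definition mat :: "(4 set \<Rightarrow> real) \<Rightarrow> 4 \<Rightarrow> 4 \<Rightarrow> real" where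
  "mat u p q = shuffle_sign {p} {q} * u {p,q}"
lemma sum4: "(\<Sum>c\<in>UNIV. f c) = f (1::4) + f 2 + f 3 + f 4"
  unfolding UNIV_4 by (simp add: n4 add.assoc)
lemma setnorm: "{1::4,4} = {4,1}" "{2::4,4} = {4,2}" "{3::4,4} = {4,3}" "{2::4,1} = {1,2}" "{3::4,1} = {1,3}" "{3::4,2} = {2,3}"
  by (simp_all add: insert_commute)

lemma is2_single: "is2 u \<Longrightarrow> u {p} = 0" "is2 u \<Longrightarrow> u {p,p} = 0" by (auto simp: is2_def)

lemma sg4: "shuffle_sign {4::4} {1} = 1" "shuffle_sign {4::4} {2} = 1" "shuffle_sign {4::4} {3} = 1" "shuffle_sign {1::4} {4} = -1" "shuffle_sign {1::4} {2} = 1" "shuffle_sign {1::4} {3} = 1" "shuffle_sign {2::4} {4} = -1" "shuffle_sign {2::4} {1} = -1" "shuffle_sign {2::4} {3} = 1" "shuffle_sign {3::4} {4} = -1" "shuffle_sign {3::4} {1} = -1" "shuffle_sign {3::4} {2} = -1"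
  by (simp_all add: ss_single less_bit0_def rep4)
lemma poly_key6: fixes a11 a12 a13 a14 a21 a22 a23 a24 a31 a32 a33 a34 a41 a42 a43 a44 x12 x13 x23 x41 x42 x43 y12 y13 y23 y41 y42 y43 :: real shows "x41 * (a21 * y13 + a31 * (- 1 * y12) + a22 * y23 + a33 * y23 + (a24 * y43 + a34 * (- 1 * y42))) - x42 * (a11 * y13 + (a12 * y23 + a32 * y12) + a33 * y13 + (a14 * y43 + a34 * (- 1 * y41))) + x43 * (a11 * y12 + a22 * y12 + (a13 * (- 1 * y23) + a23 * y13) + (a14 * y42 + a24 * (- 1 * y41))) + x12 * (a41 * y13 + a31 * y41 + (a42 * y23 + a32 * y42) + a33 * y43 + a44 * y43) - x13 * (a41 * y12 + a21 * y41 + a22 * y42 + (a43 * (- 1 * y23) + a23 * y43) + a44 * y42) + x23 * (a11 * y41 + (a42 * (- 1 * y12) + a12 * y42) + (a43 * (- 1 * y13) + a13 * y43) + a44 * y41) + ((a11 * x41 + (a42 * (- 1 * x12) + a12 * x42) + (a43 * (- 1 * x13) + a13 * x43) + a44 * x41) * y23 - (a41 * x12 + a21 * x41 + a22 * x42 + (a43 * (- 1 * x23) + a23 * x43) + a44 * x42) * y13 + (a41 * x13 + a31 * x41 + (a42 * x23 + a32 * x42) + a33 * x43 + a44 * x43) * y12 + (a11 * x12 + a22 * x12 + (a13 * (- 1 * x23) + a23 * x13) + (a14 * x42 + a24 * (- 1 * x41))) * y43 - (a11 * x13 + (a12 * x23 + a32 * x12) + a33 * x13 + (a14 * x43 + a34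 * (- 1 * x41))) * y42 + (a21 * x13 + a31 * (- 1 * x12) + a22 * x23 + a33 * x23 + (a24 * x43 + a34 * (- 1 * x42))) * y41) = (a11 + a22 + a33 + a44) * (x41 * y23 - x42 * y13 + x43 * y12 + x12 * y43 - x13 * y42 + x23 * y41)"
  by (simp add: algebra_simps)

lemma key:
  fixes u u' v v' :: "4 set \<Rightarrow> real" and A :: "4 \<Rightarrow> 4 \<Rightarrow> real"
  assumes u: "is2 u" "is2 u'" and v: "is2 v" 
    and hv: "\<And>p q. p \<noteq> q \<Longrightarrow> v {p,q} = shuffle_sign {p} {q} * (\<Sum>c\<in>UNIV. A p c * mat u c q + A q c * mat u p c)"
    and hv': "\<And>p q. p \<noteq> q \<Longrightarrow> v' {p,q} = shuffle_sign {p} {q} * (\<Sum>c\<in>UNIV. A p c * mat u' c q + A q c * mat u' p c)"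
  shows "Wt u v' + Wt v u' = (\<Sum>c\<in>UNIV. A c c) * Wt u u'"
proof -
  note S = sum4 mat_def sg4 setnorm is2_single[OF u(1)] is2_single[OF u(2)]
  note e = hv[of 4 1, OF n4(1), simplified S] hv[of 4 2, OF n4(2), simplified S] hv[of 4 3, OF n4(3), simplified S]
     hv[of 1 2, OF n4(5), simplified S] hv[of 1 3, OF n4(6), simplified S] hv[of 2 3, OF n4(9), simplified S]
  note e' = hv'[of 4 1, OF n4(1), simplified S] hv'[of 4 2, OF n4(2), simplified S] hv'[of 4 3, OF n4(3), simplified S]
     hv'[of 1 2, OF n4(5), simplified S] hv'[of 1 3, OF n4(6), simplified S] hv'[of 2 3, OF n4(9), simplified S]
  define x41 where "x41 = u {4,1}"
  define y41 where "y41 = u' {4,1}"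
  define x42 where "x42 = u {4,2}"
  define y42 where "y42 = u' {4,2}"
  define x43 where "x43 = u {4,3}"
  define y43 where "y43 = u' {4,3}"
  define x12 where "x12 = u {1,2}"
  define y12 where "y12 = u' {1,2}"
  define x13 where "x13 = u {1,3}"
  define y13 where "y13 = u' {1,3}"
  define x23 where "x23 = u {2,3}"
  define y23 where "y23 = u' {2,3}"
  define a44 where "a44 = A 4 4"
  define a41 where "a41 = A 4 1"
  define a42 where "a42 = A 4 2"
  define a43 where "a43 = A 4 3"
  define a14 where "a14 = A 1 4"
  define a11 where "a11 = A 1 1"
  define a12 where "a12 = A 1 2"
  define a13 where "a13 = A 1 3"
  define a24 where "a24 = A 2 4"
  define a21 where "a21 = A 2 1"
  define a22 where "a22 = A 2 2"
  define a23 where "a23 = A 2 3"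
  define a34 where "a34 = A 3 4"
  define a31 where "a31 = A 3 1"
  define a32 where "a32 = A 3 2"
  define a33 where "a33 = A 3 3"
  show ?thesis
    unfolding Wt_F6[OF u(1)] Wt_F6[OF v] e e' sum4
    unfolding x41_def[symmetric] y41_def[symmetric] x42_def[symmetric] y42_def[symmetric] x43_def[symmetric] y43_def[symmetric] x12_def[symmetric] y12_def[symmetric] x13_def[symmetric] y13_def[symmetric] x23_def[symmetric] y23_def[symmetric] a44_def[symmetric] a41_def[symmetric] a42_def[symmetric] a43_def[symmetric] a14_def[symmetric] a11_def[symmetric] a12_def[symmetric] a13_def[symmetric] a24_def[symmetric] a21_def[symmetric] a22_def[symmetric] a23_def[symmetric] a34_def[symmetric] a31_def[symmetric] a32_def[symmetric] a33_def[symmetric]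
    apply (simp only: mult_zero_right add_0_right add_0_left mult_1_left)
    by (rule poly_key6)
qed

lemma form_add_apply[simp]: "((\<omega>::form) + \<theta>) x I = \<omega> x I + \<theta> x I" by simp
lemma form_sum_apply: "(\<Sum>i\<in>A. (f i :: form)) x I = (\<Sum>i\<in>A. f i x I)"
  by (induction A rule: infinite_finite_induct) auto
lemma smul_apply[simp]: "smul f \<omega> x I = f x * \<omega> x I" by (simp add: smul_def)

lemma card_UNIV4: "card (UNIV :: 4 set) = 4" by simp
lemma card4_UNIV: "card (K :: 4 set) = 4 \<longleftrightarrow> K = UNIV"
  using card_subset_eq[of "UNIV :: 4 set" K] by auto

lemma kform_wedge: "is_kform p \<alpha> \<Longrightarrow> is_kform q \<beta> \<Longrightarrow> is_kform (p+q) (wedge \<alpha> \<beta>)"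
  unfolding is_kform_def wedge_def
proof (intro allI impI)
  fix x K assume a: "\<forall>x I. card I \<noteq> p \<longrightarrow> \<alpha> x I = 0" and b: "\<forall>x I. card I \<noteq> q \<longrightarrow> \<beta> x I = 0"
    and c: "card (K :: 4 set) \<noteq> p + q"
  show "(\<Sum>I\<in>Pow K. shuffle_sign I (K - I) * \<alpha> x I * \<beta> x (K - I)) = 0"
  proof (rule sum.neutral, rule ballI)
    fix I assume "I \<in> Pow K"
    then have "card (K - I) = card K - card I" "card I \<le> card K"
      by (auto simp: card_Diff_subset card_mono)
    then show "shuffle_sign I (K - I) * \<alpha> x I * \<beta> x (K - I) = 0"
      using a b c by (cases "card I = p") auto
  qed
qed

lemma kform_extd: "is_kform p \<omega> \<Longrightarrow> is_kform (Suc p) (extd \<omega>)"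
  unfolding is_kform_def extd_def
proof (intro allI impI)
  fix x K assume a: "\<forall>x I. card I \<noteq> p \<longrightarrow> \<omega> x I = 0" and c: "card (K :: 4 set) \<noteq> Suc p"
  show "(\<Sum>k\<in>K. shuffle_sign {k} (K - {k}) * partial k (\<lambda>y. \<omega> y (K - {k})) x) = 0"
  proof (rule sum.neutral, rule ballI)
    fix k assume "k \<in> K"
    then have "card (K - {k}) \<noteq> p" using c
      by (metis One_nat_def Suc_pred card.remove card_gt_0_iff finite)
    then have "(\<lambda>y. \<omega> y (K - {k})) = (\<lambda>y. 0)" using a by auto
    then show "shuffle_sign {k} (K - {k}) * partial k (\<lambda>y. \<omega> y (K - {k})) x = 0" by simp
  qed
qed

lemma kform_int: "is_kform (Suc p) \<omega> \<Longrightarrow> is_kform p (int_prod \<eta> \<omega>)"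
  unfolding is_kform_def int_prod_def
proof (intro allI impI)
  fix x I assume a: "\<forall>x I. card I \<noteq> Suc p \<longrightarrow> \<omega> x I = 0" and c: "card (I :: 4 set) \<noteq> p"
  show "(\<Sum>k\<in>- I. shuffle_sign {k} I * \<eta> x $ k * \<omega> x (insert k I)) = 0"
  proof (rule sum.neutral, rule ballI)
    fix k assume "k \<in> - I"
    then have "card (insert k I) = Suc (card I)" by simp
    then show "shuffle_sign {k} I * \<eta> x $ k * \<omega> x (insert k I) = 0" using a c by simp
  qed
qed

lemma kform_add: "is_kform p \<omega> \<Longrightarrow> is_kform p \<theta> \<Longrightarrow> is_kform p (\<omega> + \<theta>)"
  unfolding is_kform_def by simp
lemma kform_smul: "is_kform p \<omega> \<Longrightarrow> is_kform p (smul f \<omega>)"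
  unfolding is_kform_def by simp
lemma kform_zero_form: "is_kform 0 (zero_form f)"
  unfolding is_kform_def zero_form_def by auto

lemma zero_form_fun: "(\<lambda>y. zero_form f y S) = (if S = {} then f else (\<lambda>y. 0))"
  by (auto simp: zero_form_def)

lemma extd_zero_form_single: "extd (zero_form f) x {k} = partial k f x"
  by (simp add: extd_def zero_form_fun)

lemma int_prod_empty: "int_prod \<eta> \<omega> x {} = (\<Sum>k\<in>UNIV. \<eta> x $ k * \<omega> x {k})"
  by (simp add: int_prod_def)

lemma extd_pair:
  assumes "is_kform 1 \<omega>"
  shows "extd \<omega> y {c,q} = shuffle_sign {c} {q} * (partial c (\<lambda>y. \<omega> y {q}) y - partial q (\<lambda>y. \<omega> y {c}) y)"
proof (cases "c = q")
  case True
  have "(\<lambda>y. \<omega> y {}) = (\<lambda>y. 0)" using assms unfolding is_kform_def by auto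
  then show ?thesis using True by (simp add: extd_def)
next
  case False
  have e: "{c,q} - {c} = {q}" "{c,q} - {q} = {c}" using False by auto
  have "extd \<omega> y {c,q} = shuffle_sign {c} {q} * partial c (\<lambda>y. \<omega> y {q}) y + shuffle_sign {q} {c} * partial q (\<lambda>y. \<omega> y {c}) y"
    unfolding extd_def using False by (simp add: e)
  also have "shuffle_sign {q} {c} = - shuffle_sign {c} {q}"
    using ss_swap[OF False] ss_sq[of "{c}" "{q}"] by (auto simp: ss_single split: if_splits)
  finally show ?thesis by (simp add: algebra_simps)
qed

lemma int_prod_single:
  assumes "\<And>x. \<omega> x {q} = 0"
  shows "int_prod \<eta> \<omega> x {q} = (\<Sum>c\<in>UNIV. \<eta> x $ c * (shuffle_sign {c} {q} * \<omega> x {c,q}))"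
proof -
  have "(\<Sum>c\<in>UNIV. \<eta> x $ c * (shuffle_sign {c} {q} * \<omega> x {c,q}))
      = \<eta> x $ q * (shuffle_sign {q} {q} * \<omega> x {q,q}) + (\<Sum>c\<in>UNIV - {q}. \<eta> x $ c * (shuffle_sign {c} {q} * \<omega> x {c,q}))"
    by (rule sum.remove) auto
  also have "\<dots> = (\<Sum>c\<in>- {q}. shuffle_sign {c} {q} * \<eta> x $ c * \<omega> x (insert c {q}))"
    using assms by (simp add: Compl_eq_Diff_UNIV algebra_simps)
  finally show ?thesis by (simp add: int_prod_def)
qed

lemma extd_int_top:
  assumes "\<And>k. dfb (\<lambda>y. \<eta> y $ k * \<omega> y UNIV)"
  shows "extd (int_prod \<eta> \<omega>) x UNIV = (\<Sum>k\<in>UNIV. partial k (\<lambda>y. \<eta> y $ k * \<omega> y UNIV) x)"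
proof -
  have c: "- (UNIV - {k}) = {k}" "insert k (UNIV - {k}) = UNIV" for k :: 4 by auto
  have eq: "partial k (\<lambda>y. int_prod \<eta> \<omega> y (UNIV - {k})) x = shuffle_sign {k} (UNIV - {k}) * partial k (\<lambda>y. \<eta> y $ k * \<omega> y UNIV) x" for k
  proof -
    have "(\<lambda>y. int_prod \<eta> \<omega> y (UNIV - {k})) = (\<lambda>y. shuffle_sign {k} (UNIV - {k}) * (\<eta> y $ k * \<omega> y UNIV))"
      by (simp add: int_prod_def c mult.assoc)
    then show ?thesis using assms[of k] by simp
  qed
  show ?thesis unfolding extd_def eq by (simp add: mult.assoc[symmetric])
qed

lemma extd_lin:
  assumes "\<And>J. dfb (\<lambda>y. \<omega> y J)" "\<And>J. dfb (\<lambda>y. \<theta> y J)"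
  shows "extd (\<omega> + smul (\<lambda>_. c) \<theta>) = extd \<omega> + smul (\<lambda>_. c) (extd \<theta>)"
proof (intro ext)
  fix x K
  show "extd (\<omega> + smul (\<lambda>_. c) \<theta>) x K = (extd \<omega> + smul (\<lambda>_. c) (extd \<theta>)) x K"
    using assms by (simp add: extd_def sum_distrib_left sum.distrib algebra_simps)
qed

lemma form_lin_apply: "(\<omega> + smul (\<lambda>_. c) \<theta>) x = (\<lambda>S. \<omega> x S + c * \<theta> x S)"
  by (auto simp: smul_def)

lemma Wt_lin_left: "Wt (\<lambda>I. u I + c * v I) w = Wt u w + c * Wt v w"
  by (simp add: Wt_def algebra_simps sum.distrib sum_distrib_left)
lemma Wt_lin_right: "Wt w (\<lambda>I. u I + c * v I) = Wt w u + c * Wt w v"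
  by (simp add: Wt_def algebra_simps sum.distrib sum_distrib_left)
lemma Wt_add_left: "Wt (\<lambda>I. u I + v I) w = Wt u w + Wt v w"
  by (simp add: Wt_def algebra_simps sum.distrib)
lemma Wt_add_right: "Wt w (\<lambda>I. u I + v I) = Wt w u + Wt w v"
  by (simp add: Wt_def algebra_simps sum.distrib)
lemma Wt_diff_left: "Wt (\<lambda>I. u I - v I) w = Wt u w - Wt v w"
  by (simp add: Wt_def algebra_simps sum_subtractf)
lemma Wt_diff_right: "Wt w (\<lambda>I. u I - v I) = Wt w u - Wt w v"
  by (simp add: Wt_def algebra_simps sum_subtractf)
lemma Wt_smul_left: "Wt (\<lambda>I. c * v I) w = c * Wt v w"
  by (simp add: Wt_def algebra_simps sum_distrib_left)
lemma Wt_smul_right: "Wt w (\<lambda>I. c * v I) = c * Wt w v"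
  by (simp add: Wt_def algebra_simps sum_distrib_left)
lemma Wt_sum_left: "Wt (\<lambda>I. \<Sum>k\<in>A. f k I) w = (\<Sum>k\<in>A. Wt (f k) w)"
  unfolding Wt_def by (simp add: sum_distrib_left sum_distrib_right algebra_simps sum.swap[of _ A])
lemma Wt_sum_right: "Wt w (\<lambda>I. \<Sum>k\<in>A. f k I) = (\<Sum>k\<in>A. Wt w (f k))"
  unfolding Wt_def by (simp add: sum_distrib_left sum_distrib_right algebra_simps sum.swap[of _ A])
lemma Wt_zero_left: "Wt (\<lambda>I. 0) w = 0" by (simp add: Wt_def)

lemma Wt_sym: "is2 u \<Longrightarrow> is2 v \<Longrightarrow> Wt u v = Wt v u"
  by (simp only: Wt_F6) (simp add: algebra_simps)

lemma dfb_Wt: "(\<And>S. dfb (\<lambda>y. \<alpha> y S)) \<Longrightarrow> (\<And>S. dfb (\<lambda>y. \<beta> y S)) \<Longrightarrow> dfb (\<lambda>y. Wt (\<alpha> y) (\<beta> y))"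
  unfolding Wt_def by (intro dfb_sum dfb_mult dfb_const) auto

lemma partial_Wt:
  assumes "\<And>S. dfb (\<lambda>y. \<alpha> y S)" "\<And>S. dfb (\<lambda>y. \<beta> y S)"
  shows "partial k (\<lambda>y. Wt (\<alpha> y) (\<beta> y)) x = Wt (\<lambda>S. partial k (\<lambda>y. \<alpha> y S) x) (\<beta> x) + Wt (\<alpha> x) (\<lambda>S. partial k (\<lambda>y. \<beta> y S) x)"
  using assms unfolding Wt_def by (simp add: algebra_simps sum.distrib)

lemma deriv_poly:
  fixes p q c0 c1 c2 :: "'i \<Rightarrow> 'j \<Rightarrow> real"
  shows "deriv (\<lambda>e. \<Sum>i\<in>A. \<Sum>j\<in>B. (p i j + e * q i j) * (c0 i j + e * c1 i j + e^2 * c2 i j)) 0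
        = (\<Sum>i\<in>A. \<Sum>j\<in>B. q i j * c0 i j + p i j * c1 i j)"
proof (rule DERIV_imp_deriv)
  show "((\<lambda>e. \<Sum>i\<in>A. \<Sum>j\<in>B. (p i j + e * q i j) * (c0 i j + e * c1 i j + e^2 * c2 i j)) has_real_derivative
     (\<Sum>i\<in>A. \<Sum>j\<in>B. q i j * c0 i j + p i j * c1 i j)) (at 0)"
    by (rule DERIV_sum, rule DERIV_sum) (auto intro!: derivative_eq_intros)
qed

lemma smooth_form_comp: "smooth_form \<omega> \<Longrightarrow> smooth_fun (\<lambda>y. \<omega> y S)"
  by (simp add: smooth_form_def)
lemma smooth_vf_comp: "smooth_vf \<eta> \<Longrightarrow> smooth_fun (\<lambda>y. \<eta> y $ k)"
  by (simp add: smooth_vf_def)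

lemma mat_antisym: "is2 u \<Longrightarrow> mat u p c = - mat u c p"
proof (cases "p = c")
  case True assume "is2 u" then show ?thesis using True by (simp add: mat_def is2_single)
next
  case False assume "is2 u"
  have "shuffle_sign {c} {p} = - shuffle_sign {p} {c}"
    using ss_swap[OF False] by (auto simp: ss_single split: if_splits)
  then show ?thesis by (simp add: mat_def insert_commute)
qed

lemma is2_kform: "is_kform 2 \<omega> \<Longrightarrow> is2 (\<omega> x)"
  by (simp add: is_kform_def is2_def)

lemma D_formula:
  fixes a :: form and \<xi> :: "real^4 \<Rightarrow> real" and \<eta> :: "real^4 \<Rightarrow> real^4" and Hc :: "4 set \<Rightarrow> real" and M :: real
  assumes a1: "is_kform 1 a" and sa: "smooth_form a" and s\<xi>: "smooth_fun \<xi>" and s\<eta>: "smooth_vf \<eta>"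
    and Hc2: "is2 Hc" and pq: "p \<noteq> q"
  shows "extd (extd (zero_form \<xi>) + int_prod \<eta> (smul (\<lambda>_. M\<^sup>2) (\<lambda>_. Hc) + extd a)) x {p,q}
         - (\<Sum>k\<in>UNIV. \<eta> x $ k * partial k (\<lambda>y. extd a y {p,q}) x)
        = shuffle_sign {p} {q} * (\<Sum>c\<in>UNIV. partial p (\<lambda>y. \<eta> y $ c) x * mat (\<lambda>S. M\<^sup>2 * Hc S + extd a x S) c q
                                      + partial q (\<lambda>y. \<eta> y $ c) x * mat (\<lambda>S. M\<^sup>2 * Hc S + extd a x S) p c)"
proof -
  define \<alpha> where "\<alpha> = (\<lambda>c y. a y {c})"
  define F where "F = extd a"
  define \<omega> where "\<omega> = smul (\<lambda>_. M\<^sup>2) (\<lambda>_. Hc) + F"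
  define \<delta>a where "\<delta>a = extd (zero_form \<xi>) + int_prod \<eta> \<omega>"
  define g where "g = (\<lambda>c q y. M\<^sup>2 * mat Hc c q + (partial c (\<alpha> q) y - partial q (\<alpha> c) y))"
  have s\<alpha>: "smooth_fun (\<alpha> c)" for c unfolding \<alpha>_def using sa by (rule smooth_form_comp)
  have d\<alpha>[simp]: "dfb (partial c (\<alpha> q))" for c q using s\<alpha> by (rule smooth_dfb_partial)
  have d\<xi>[simp]: "dfb (partial q \<xi>)" for q using s\<xi> by (rule smooth_dfb_partial)
  have d\<eta>[simp]: "dfb (\<lambda>y. \<eta> y $ c)" for c using s\<eta> by (simp add: smooth_vf_comp smooth_dfb)
  have Fpair: "F y {c,q} = shuffle_sign {c} {q} * (partial c (\<alpha> q) y - partial q (\<alpha> c) y)" for y c q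
    unfolding F_def \<alpha>_def by (rule extd_pair[OF a1])
  have F2: "is_kform 2 F" unfolding F_def using kform_extd[OF a1] by (simp add: numeral_2_eq_2)
  have H2: "is_kform 2 (\<lambda>_::real^4. Hc)" using Hc2 by (simp add: is_kform_def is2_def)
  have \<omega>2: "is_kform 2 \<omega>" unfolding \<omega>_def by (intro kform_add kform_smul H2 F2)
  have \<delta>a1: "is_kform 1 \<delta>a" unfolding \<delta>a_def
    using kform_extd[OF kform_zero_form] kform_int[of 1 \<omega>] \<omega>2 by (auto intro!: kform_add simp: numeral_2_eq_2)
  have \<omega>single: "\<omega> y {q} = 0" for y q using \<omega>2 by (simp add: is_kform_def)
  have comp: "(\<lambda>y. \<delta>a y {q}) = (\<lambda>y. partial q \<xi> y + (\<Sum>c\<in>UNIV. \<eta> y $ c * g c q y))" for q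
  proof
    fix y
    have "\<delta>a y {q} = partial q \<xi> y + (\<Sum>c\<in>UNIV. \<eta> y $ c * (shuffle_sign {c} {q} * \<omega> y {c,q}))"
      unfolding \<delta>a_def by (simp add: extd_zero_form_single int_prod_single[of \<omega>, OF \<omega>single])
    also have "(\<lambda>c. shuffle_sign {c} {q} * \<omega> y {c,q}) = (\<lambda>c. g c q y)"
    proof
      fix c
      have "shuffle_sign {c} {q} * \<omega> y {c,q} = M\<^sup>2 * (shuffle_sign {c} {q} * Hc {c,q}) + (shuffle_sign {c} {q} * shuffle_sign {c} {q}) * (partial c (\<alpha> q) y - partial q (\<alpha> c) y)"
        unfolding \<omega>_def by (simp add: Fpair algebra_simps)
      then show "shuffle_sign {c} {q} * \<omega> y {c,q} = g c q y" by (simp add: g_def mat_def)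
    qed
    finally show "\<delta>a y {q} = partial q \<xi> y + (\<Sum>c\<in>UNIV. \<eta> y $ c * g c q y)" .
  qed
  have Pq: "partial p' (\<lambda>y. \<delta>a y {q}) x = partial p' (partial q \<xi>) x
     + (\<Sum>c\<in>UNIV. partial p' (\<lambda>y. \<eta> y $ c) x * g c q x + \<eta> x $ c * (partial p' (partial c (\<alpha> q)) x - partial p' (partial q (\<alpha> c)) x))" for p' q
    unfolding comp g_def by simp
  have ext: "extd \<delta>a x {p,q} = shuffle_sign {p} {q} * (partial p (\<lambda>y. \<delta>a y {q}) x - partial q (\<lambda>y. \<delta>a y {p}) x)"
    by (rule extd_pair[OF \<delta>a1])
  have dF: "partial k (\<lambda>y. F y {p,q}) x = shuffle_sign {p} {q} * (partial k (partial p (\<alpha> q)) x - partial k (partial q (\<alpha> p)) x)" for k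
    unfolding Fpair by simp
  have matG: "mat (\<lambda>S. M\<^sup>2 * Hc S + F x S) c q' = g c q' x" for c q'
    by (simp add: mat_def g_def Fpair algebra_simps)
  have gas: "g p' c x = - g c p' x" for p' c
    using mat_antisym[OF Hc2, of p' c] by (simp add: g_def)
  have sch: "partial p (partial q \<xi>) x = partial q (partial p \<xi>) x"
    "\<And>c. partial p (partial c (\<alpha> q)) x = partial c (partial p (\<alpha> q)) x"
    "\<And>c. partial q (partial c (\<alpha> p)) x = partial c (partial q (\<alpha> p)) x"
    "\<And>c. partial p (partial q (\<alpha> c)) x = partial q (partial p (\<alpha> c)) x"
    using schwarz s\<xi> s\<alpha> by blast+
  have termwise: "(partial p (\<lambda>y. \<eta> y $ c) x * g c q x + \<eta> x $ c * (partial p (partial c (\<alpha> q)) x - partial p (partial q (\<alpha> c)) x))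
      - (partial q (\<lambda>y. \<eta> y $ c) x * g c p x + \<eta> x $ c * (partial q (partial c (\<alpha> p)) x - partial q (partial p (\<alpha> c)) x))
      - \<eta> x $ c * (partial c (partial p (\<alpha> q)) x - partial c (partial q (\<alpha> p)) x)
      = partial p (\<lambda>y. \<eta> y $ c) x * g c q x + partial q (\<lambda>y. \<eta> y $ c) x * g p c x" for c
    using gas[of p c] sch(2-4)[of c] by (simp add: algebra_simps)
  define T1 where "T1 = (\<lambda>c. partial p (\<lambda>y. \<eta> y $ c) x * g c q x + \<eta> x $ c * (partial p (partial c (\<alpha> q)) x - partial p (partial q (\<alpha> c)) x))"
  define T2 where "T2 = (\<lambda>c. partial q (\<lambda>y. \<eta> y $ c) x * g c p x + \<eta> x $ c * (partial q (partial c (\<alpha> p)) x - partial q (partial p (\<alpha> c)) x))"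
  define U where "U = (\<lambda>c. partial c (partial p (\<alpha> q)) x - partial c (partial q (\<alpha> p)) x)"
  have s2: "(\<Sum>k\<in>UNIV. \<eta> x $ k * (shuffle_sign {p} {q} * U k)) = shuffle_sign {p} {q} * (\<Sum>k\<in>UNIV. \<eta> x $ k * U k)"
    by (simp add: sum_distrib_left algebra_simps)
  have s1: "(\<Sum>c\<in>UNIV. T1 c - T2 c - \<eta> x $ c * U c) = (\<Sum>c\<in>UNIV. T1 c) - (\<Sum>c\<in>UNIV. T2 c) - (\<Sum>c\<in>UNIV. \<eta> x $ c * U c)"
    by (simp add: sum_subtractf)
  have dF': "partial k (\<lambda>y. F y {p,q}) x = shuffle_sign {p} {q} * U k" for k
    unfolding dF U_def by simp
  have "extd \<delta>a x {p,q} - (\<Sum>k\<in>UNIV. \<eta> x $ k * partial k (\<lambda>y. F y {p,q}) x)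
     = shuffle_sign {p} {q} * ((partial p (partial q \<xi>) x - partial q (partial p \<xi>) x)
        + (\<Sum>c\<in>UNIV. T1 c - T2 c - \<eta> x $ c * U c))"
    unfolding ext Pq dF' s2 s1 T1_def[symmetric] T2_def[symmetric] by (simp add: algebra_simps)
  also have "\<dots> = shuffle_sign {p} {q} * (\<Sum>c\<in>UNIV. partial p (\<lambda>y. \<eta> y $ c) x * g c q x + partial q (\<lambda>y. \<eta> y $ c) x * g p c x)"
    unfolding T1_def T2_def U_def termwise sch(1) by simp
  finally show ?thesis unfolding \<delta>a_def[symmetric] \<omega>_def[symmetric] F_def[symmetric] matG
    unfolding \<delta>a_def \<omega>_def by simp
qed

lemma iter_partial_zero: "iter_partial ks (\<lambda>y::real^4. 0) = (\<lambda>y. 0)"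
  by (induction ks) auto
lemma smooth_zero: "smooth_fun (\<lambda>y. 0)"
  unfolding smooth_fun_def iter_partial_zero by simp
lemma smooth_zero_form: "smooth_fun f \<Longrightarrow> smooth_fun (\<lambda>y. zero_form f y S)"
  unfolding zero_form_fun by (simp add: smooth_zero)

lemma dfb_extd: "(\<And>S. smooth_fun (\<lambda>y. \<omega> y S)) \<Longrightarrow> dfb (\<lambda>y. extd \<omega> y J)"
  unfolding extd_def by (intro dfb_sum dfb_mult dfb_const) (auto intro: smooth_dfb_partial)

lemma dfb_int: "(\<And>k. dfb (\<lambda>y. \<eta> y $ k)) \<Longrightarrow> (\<And>S. dfb (\<lambda>y. \<omega> y S)) \<Longrightarrow> dfb (\<lambda>y. int_prod \<eta> \<omega> y J)"
  unfolding int_prod_def by (intro dfb_sum dfb_mult dfb_const) auto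

lemma kform_sum: "(\<And>i. i \<in> A \<Longrightarrow> is_kform p (f i)) \<Longrightarrow> is_kform p (\<Sum>i\<in>A. f i)"
  unfolding is_kform_def form_sum_apply by auto

lemma Lag_kform:
  assumes "\<And>i. is_kform 1 (b i)" "\<And>i. is_kform 2 (H i)"
  shows "is_kform 4 (Lag M H b \<Phi>)"
proof -
  have e: "is_kform 2 (extd (b i))" for i using kform_extd[OF assms(1)] by (simp add: numeral_2_eq_2)
  have w: "is_kform 4 (wedge \<alpha> \<beta>)" if "is_kform 2 \<alpha>" "is_kform 2 \<beta>" for \<alpha> \<beta>
    using kform_wedge[OF that] by simp
  show ?thesis unfolding Lag_def
    by (intro kform_sum kform_smul kform_add w e assms(2))
qed

lemma Lag_top: "Lag M H b \<Phi> x UNIV = (\<Sum>i\<in>UNIV. \<Sum>j\<in>UNIV. \<Phi> i j x *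
   (M\<^sup>2 * Wt (H i x) (extd (b j) x) + 1/2 * Wt (extd (b i) x) (extd (b j) x)))"
  unfolding Lag_def form_sum_apply by (simp add: wedge_def Wt_def)

lemma dPsi_eval: "int_prod \<eta> (extd (zero_form f)) x {} = (\<Sum>k\<in>UNIV. \<eta> x $ k * partial k f x)"
  by (simp add: int_prod_empty extd_zero_form_single)

lemma dfb_divide[simp]: "dfb f \<Longrightarrow> dfb (\<lambda>y. f y / c)"
proof -
  assume "dfb f"
  then have "dfb (\<lambda>y. f y * (1/c))" by (intro dfb_mult dfb_const)
  then show ?thesis by simp
qed
lemma partial_divide[simp]: "dfb f \<Longrightarrow> partial k (\<lambda>y. f y / c) = (\<lambda>x. partial k f x / c)"
proof -
  assume "dfb f"
  then have "partial k (\<lambda>y. f y * (1/c)) = (\<lambda>x. partial k f x * (1/c) + f x * partial k (\<lambda>y. 1/c) x)"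
    by (intro partial_mult) auto
  then show ?thesis by simp
qed

theorem mainTheorem2:
  fixes H :: "3 \<Rightarrow> form" and vol :: form and M :: real
    and a :: "3 \<Rightarrow> form" and \<Psi> :: "3 \<Rightarrow> 3 \<Rightarrow> real^4 \<Rightarrow> real"
    and \<eta> :: "real^4 \<Rightarrow> real^4" and \<xi> :: "3 \<Rightarrow> real^4 \<Rightarrow> real"
  assumes H_two: "\<And>i. is_kform 2 (H i)" and H_const: "\<And>i. constant_form (H i)"
    and vol_four: "is_kform 4 vol" and vol_const: "constant_form vol"
    and vol_nonzero: "\<And>x. vol x \<noteq> (\<lambda>_. 0)"
    and HH: "\<And>i j. wedge (H i) (H j) = smul (\<lambda>_. if i = j then 2 else 0) vol"
    and M_pos: "M > 0"
    and a_one: "\<And>i. is_kform 1 (a i)" and a_smooth: "\<And>i. smooth_form (a i)"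
    and \<Psi>_smooth: "\<And>i j. smooth_fun (\<Psi> i j)"
    and \<Psi>_sym: "\<And>i j. \<Psi> i j = \<Psi> j i"
    and \<Psi>_tracefree: "\<And>x. (\<Sum>i\<in>UNIV. \<Psi> i i x) = 0"
    and \<eta>_smooth: "smooth_vf \<eta>"
    and \<xi>_smooth: "\<And>i. smooth_fun (\<xi> i)"
  shows "first_variation M H a \<Psi>
           (\<lambda>i. extd (zero_form (\<xi> i))
                  + int_prod \<eta> (smul (\<lambda>_. M\<^sup>2) (H i) + extd (a i)))
           (\<lambda>i j x. int_prod \<eta> (extd (zero_form (\<Psi> i j))) x {})
         = extd (int_prod \<eta> (Lag M H a \<Psi>))"
proof -
  define \<delta>a where "\<delta>a = (\<lambda>i. extd (zero_form (\<xi> i)) + int_prod \<eta> (smul (\<lambda>_. M\<^sup>2) (H i) + extd (a i)))"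
  define \<delta>\<Psi> where "\<delta>\<Psi> = (\<lambda>i j x. int_prod \<eta> (extd (zero_form (\<Psi> i j))) x {})"
  define hc where "hc = (\<lambda>i. H i 0)"
  have Hc: "H i = (\<lambda>_. hc i)" for i using H_const[of i] unfolding constant_form_def hc_def by auto
  have hc2: "is2 (hc i)" for i using H_two[of i] unfolding Hc is_kform_def is2_def by auto
  define F where "F = (\<lambda>i. extd (a i))"
  define \<delta>F where "\<delta>F = (\<lambda>i. extd (\<delta>a i))"
  have d\<eta>: "dfb (\<lambda>y. \<eta> y $ c)" for c using \<eta>_smooth by (simp add: smooth_vf_comp smooth_dfb)
  have sa: "smooth_fun (\<lambda>y. a i y S)" for i S using a_smooth by (rule smooth_form_comp)
  have da: "dfb (\<lambda>y. a i y S)" for i S using sa by (rule smooth_dfb)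
  have dF: "dfb (\<lambda>y. F i y S)" for i S unfolding F_def by (rule dfb_extd[OF sa])
  have d\<delta>a: "dfb (\<lambda>y. \<delta>a i y S)" for i S
  proof -
    have "dfb (\<lambda>y. extd (zero_form (\<xi> i)) y S)" by (rule dfb_extd, rule smooth_zero_form[OF \<xi>_smooth])
    moreover have "dfb (\<lambda>y. int_prod \<eta> (smul (\<lambda>_. M\<^sup>2) (H i) + extd (a i)) y S)"
      by (rule dfb_int[OF d\<eta>]) (use dF in \<open>simp add: Hc F_def\<close>)
    ultimately show ?thesis unfolding \<delta>a_def by simp
  qed
  have a1: "is_kform 1 (a i)" for i by (rule a_one)
  have F2: "is_kform 2 (F i)" for i unfolding F_def using kform_extd[OF a_one] by (simp add: numeral_2_eq_2)
  have \<delta>a1: "is_kform 1 (\<delta>a i)" for i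
  proof -
    have "is_kform 2 (smul (\<lambda>_. M\<^sup>2) (H i) + extd (a i))"
      using F2[of i] H_two[of i] unfolding F_def by (intro kform_add kform_smul)
    then show ?thesis unfolding \<delta>a_def
      using kform_extd[OF kform_zero_form] kform_int[of 1] by (auto intro!: kform_add simp: numeral_2_eq_2)
  qed
  have \<delta>F2: "is_kform 2 (\<delta>F i)" for i unfolding \<delta>F_def using kform_extd[OF \<delta>a1] by (simp add: numeral_2_eq_2)
  have lin: "extd (a i + smul (\<lambda>_. e) (\<delta>a i)) = F i + smul (\<lambda>_. e) (\<delta>F i)" for i e
    unfolding F_def \<delta>F_def by (rule extd_lin[OF da d\<delta>a])
  have pert1: "is_kform 1 (a i + smul (\<lambda>_. e) (\<delta>a i))" for i e
    by (intro kform_add kform_smul a1 \<delta>a1)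
  have L4: "is_kform 4 (Lag M H a \<Psi>)" by (rule Lag_kform[OF a1 H_two])
  show ?thesis
    unfolding \<delta>a_def[symmetric] \<delta>\<Psi>_def[symmetric]
  proof (intro ext)
    fix x K
    show "first_variation M H a \<Psi> \<delta>a \<delta>\<Psi> x K = extd (int_prod \<eta> (Lag M H a \<Psi>)) x K"
    proof (cases "K = UNIV")
      case False
      then have cK: "card K \<noteq> 4" using card4_UNIV by blast
      have "Lag M H (\<lambda>i. a i + smul (\<lambda>_. e) (\<delta>a i)) (\<lambda>i j y. \<Psi> i j y + e * \<delta>\<Psi> i j y) x K = 0" for e
      proof -
        have "is_kform 4 (Lag M H (\<lambda>i. a i + smul (\<lambda>_. e) (\<delta>a i)) (\<lambda>i j y. \<Psi> i j y + e * \<delta>\<Psi> i j y))"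
          by (rule Lag_kform, rule pert1, rule H_two)
        then show ?thesis using cK unfolding is_kform_def by blast
      qed
      then have l: "first_variation M H a \<Psi> \<delta>a \<delta>\<Psi> x K = 0"
        unfolding first_variation_def by simp
      have "is_kform (Suc 3) (extd (int_prod \<eta> (Lag M H a \<Psi>)))"
        by (rule kform_extd, rule kform_int) (use L4 in \<open>simp add: numeral_eq_Suc\<close>)
      then have "extd (int_prod \<eta> (Lag M H a \<Psi>)) x K = 0" using cK unfolding is_kform_def by simp
      then show ?thesis using l by simp
    next
      case True
      define Fv where "Fv = (\<lambda>i. F i x)"
      define \<delta>Fv where "\<delta>Fv = (\<lambda>i. \<delta>F i x)"
      define c0 where "c0 = (\<lambda>i j. M\<^sup>2 * Wt (hc i) (Fv j) + 1/2 * Wt (Fv i) (Fv j))"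
      define c1 where "c1 = (\<lambda>i j. M\<^sup>2 * Wt (hc i) (\<delta>Fv j) + 1/2 * (Wt (Fv i) (\<delta>Fv j) + Wt (\<delta>Fv i) (Fv j)))"
      define c2 where "c2 = (\<lambda>i j. 1/2 * Wt (\<delta>Fv i) (\<delta>Fv j))"
      have Lpert: "Lag M H (\<lambda>i. a i + smul (\<lambda>_. e) (\<delta>a i)) (\<lambda>i j y. \<Psi> i j y + e * \<delta>\<Psi> i j y) x UNIV
         = (\<Sum>i\<in>UNIV. \<Sum>j\<in>UNIV. (\<Psi> i j x + e * \<delta>\<Psi> i j x) * (c0 i j + e * c1 i j + e^2 * c2 i j))" for e
        unfolding Lag_top lin form_lin_apply Hc
        by (intro sum.cong refl) (simp add: Wt_lin_left Wt_lin_right c0_def c1_def c2_def Fv_def \<delta>Fv_def power2_eq_square algebra_simps)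
      have LHS: "first_variation M H a \<Psi> \<delta>a \<delta>\<Psi> x UNIV = (\<Sum>i\<in>UNIV. \<Sum>j\<in>UNIV. \<delta>\<Psi> i j x * c0 i j + \<Psi> i j x * c1 i j)"
        unfolding first_variation_def Lpert deriv_poly ..
      define ell where "ell = (\<lambda>y. Lag M H a \<Psi> y UNIV)"
      have ell_eq: "ell = (\<lambda>y. \<Sum>i\<in>UNIV. \<Sum>j\<in>UNIV. \<Psi> i j y * (M\<^sup>2 * Wt (hc i) (F j y) + 1/2 * Wt (F i y) (F j y)))"
        unfolding ell_def Lag_top Hc F_def ..
      have d\<Psi>: "dfb (\<Psi> i j)" for i j using \<Psi>_smooth by (rule smooth_dfb)
      have dW1: "dfb (\<lambda>y. Wt (hc i) (F j y))" for i j by (rule dfb_Wt) (simp_all add: dF)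
      have dW2: "dfb (\<lambda>y. Wt (F i y) (F j y))" for i j by (rule dfb_Wt) (simp_all add: dF)
      have dell: "dfb ell" unfolding ell_eq
        by (intro dfb_sum dfb_mult dfb_add dfb_const d\<Psi> dW1 dW2) auto
      define dFv where "dFv = (\<lambda>k j S. partial k (\<lambda>y. F j y S) x)"
      define Z where "Z = (\<lambda>k i j. M\<^sup>2 * Wt (hc i) (dFv k j) + 1/2 * (Wt (Fv i) (dFv k j) + Wt (dFv k i) (Fv j)))"
      have pW1: "partial k (\<lambda>y. Wt (hc i) (F j y)) x = Wt (hc i) (dFv k j)" for k i j
        using partial_Wt[of "\<lambda>y. hc i" "\<lambda>y. F j y" k x] dF by (simp add: Wt_zero_left dFv_def)
      have pW2: "partial k (\<lambda>y. Wt (F i y) (F j y)) x = Wt (dFv k i) (Fv j) + Wt (Fv i) (dFv k j)" for k i j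
        using partial_Wt[of "\<lambda>y. F i y" "\<lambda>y. F j y" k x] dF by (simp add: dFv_def Fv_def)
      have pell: "partial k ell x = (\<Sum>i\<in>UNIV. \<Sum>j\<in>UNIV. partial k (\<Psi> i j) x * c0 i j + \<Psi> i j x * Z k i j)" for k
      proof -
        have "partial k ell x = (\<Sum>i\<in>UNIV. \<Sum>j\<in>UNIV. partial k (\<Psi> i j) x * (M\<^sup>2 * Wt (hc i) (F j x) + 1/2 * Wt (F i x) (F j x))
           + \<Psi> i j x * (M\<^sup>2 * Wt (hc i) (dFv k j) + 1/2 * (Wt (dFv k i) (Fv j) + Wt (Fv i) (dFv k j))))"
          unfolding ell_eq using d\<Psi> dW1 dW2 by (simp add: pW1 pW2)
        also have "\<dots> = (\<Sum>i\<in>UNIV. \<Sum>j\<in>UNIV. partial k (\<Psi> i j) x * c0 i j + \<Psi> i j x * Z k i j)"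
          by (simp add: c0_def Z_def Fv_def algebra_simps)
        finally show ?thesis .
      qed
      have ellx: "ell x = (\<Sum>i\<in>UNIV. \<Sum>j\<in>UNIV. \<Psi> i j x * c0 i j)"
        unfolding ell_eq c0_def Fv_def ..
      have RHS: "extd (int_prod \<eta> (Lag M H a \<Psi>)) x UNIV = (\<Sum>k\<in>UNIV. partial k (\<lambda>y. \<eta> y $ k) x * ell x + \<eta> x $ k * partial k ell x)"
      proof -
        have "extd (int_prod \<eta> (Lag M H a \<Psi>)) x UNIV = (\<Sum>k\<in>UNIV. partial k (\<lambda>y. \<eta> y $ k * ell y) x)"
          unfolding ell_def by (rule extd_int_top) (use d\<eta> dell in \<open>simp add: ell_def\<close>)
        then show ?thesis using d\<eta> dell by simp
      qed
      define A where "A = (\<lambda>p c. partial p (\<lambda>y. \<eta> y $ c) x)"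
      define G where "G = (\<lambda>j S. M\<^sup>2 * hc j S + Fv j S)"
      define Dv where "Dv = (\<lambda>j S. \<delta>Fv j S - (\<Sum>k\<in>UNIV. \<eta> x $ k * dFv k j S))"
      have DvF: "Dv j {p,q} = shuffle_sign {p} {q} * (\<Sum>c\<in>UNIV. A p c * mat (G j) c q + A q c * mat (G j) p c)" if "p \<noteq> q" for j p q
      proof -
        have "\<delta>a j = extd (zero_form (\<xi> j)) + int_prod \<eta> (smul (\<lambda>_. M\<^sup>2) (\<lambda>_. hc j) + extd (a j))"
          unfolding \<delta>a_def Hc ..
        then show ?thesis
          using D_formula[where x=x and M=M, OF a_one[of j] a_smooth[of j] \<xi>_smooth[of j] \<eta>_smooth hc2[of j] that]
          unfolding Dv_def \<delta>Fv_def \<delta>F_def A_def G_def Fv_def F_def dFv_def by simp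
      qed
      have isF: "is2 (Fv j)" for j unfolding Fv_def by (rule is2_kform[OF F2])
      have is\<delta>F: "is2 (\<delta>Fv j)" for j unfolding \<delta>Fv_def by (rule is2_kform[OF \<delta>F2])
      have isG: "is2 (G j)" for j using isF[of j] hc2[of j] unfolding G_def is2_def by simp
      have isdF: "is2 (dFv k j)" for k j
        unfolding is2_def
      proof (intro allI impI)
        fix S :: "4 set" assume "card S \<noteq> 2"
        then have "(\<lambda>y. F j y S) = (\<lambda>y. 0)" using F2[of j] unfolding is_kform_def by auto
        then show "dFv k j S = 0" unfolding dFv_def by simp
      qed
      have isD: "is2 (Dv j)" for j using is\<delta>F[of j] isdF unfolding Dv_def is2_def by simp
      have key_ij: "Wt (G i) (Dv j) + Wt (Dv i) (G j) = (\<Sum>c\<in>UNIV. A c c) * Wt (G i) (G j)" for i j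
        by (rule key[OF isG isG isD DvF DvF])
      define trA where "trA = (\<Sum>c\<in>UNIV. A c c)"
      define X where "X = (\<lambda>i j. M\<^sup>2 * Wt (hc i) (Dv j) + 1/2 * (Wt (Fv i) (Dv j) + Wt (Dv i) (Fv j)))"
      have \<delta>Fv_split: "\<delta>Fv j = (\<lambda>S. Dv j S + (\<Sum>k\<in>UNIV. \<eta> x $ k * dFv k j S))" for j
        unfolding Dv_def by simp
      have c1split: "c1 i j = X i j + (\<Sum>k\<in>UNIV. \<eta> x $ k * Z k i j)" for i j
        unfolding c1_def X_def Z_def \<delta>Fv_split Wt_add_left Wt_add_right Wt_sum_left Wt_sum_right Wt_smul_left Wt_smul_right
        by (simp add: sum.distrib sum_distrib_left algebra_simps)
      have pair: "X i j + X j i = trA * (M\<^sup>2 * M\<^sup>2 * Wt (hc i) (hc j) + c0 i j + c0 j i)" for i j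
      proof -
        have GD: "Wt (G i) (Dv j) = M\<^sup>2 * Wt (hc i) (Dv j) + Wt (Fv i) (Dv j)"
          unfolding G_def Wt_add_left Wt_smul_left ..
        have DG: "Wt (Dv i) (G j) = M\<^sup>2 * Wt (Dv i) (hc j) + Wt (Dv i) (Fv j)"
          unfolding G_def Wt_add_right Wt_smul_right ..
        have GG: "Wt (G i) (G j) = M\<^sup>2 * (M\<^sup>2 * Wt (hc i) (hc j) + Wt (hc i) (Fv j)) + (M\<^sup>2 * Wt (Fv i) (hc j) + Wt (Fv i) (Fv j))"
          unfolding G_def Wt_add_left Wt_add_right Wt_smul_left Wt_smul_right by (simp add: algebra_simps)
        have s1: "Wt (Dv i) (hc j) = Wt (hc j) (Dv i)" by (rule Wt_sym[OF isD hc2])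
        have s2: "Wt (Fv j) (Dv i) = Wt (Dv i) (Fv j)" by (rule Wt_sym[OF isF isD])
        have s3: "Wt (Dv j) (Fv i) = Wt (Fv i) (Dv j)" by (rule Wt_sym[OF isD isF])
        have s4: "Wt (Fv i) (hc j) = Wt (hc j) (Fv i)" by (rule Wt_sym[OF isF hc2])
        have s5: "Wt (Fv j) (Fv i) = Wt (Fv i) (Fv j)" by (rule Wt_sym[OF isF isF])
        show ?thesis using key_ij[of i j] GD DG GG s1 s2 s3 s4 s5 unfolding X_def c0_def trA_def
          by algebra
      qed
      have sumsym: "(\<Sum>i\<in>UNIV. \<Sum>j\<in>UNIV. \<Psi> i j x * f j i) = (\<Sum>i\<in>UNIV. \<Sum>j\<in>UNIV. \<Psi> i j x * f i j)" for f :: "3 \<Rightarrow> 3 \<Rightarrow> real"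
        by (subst sum.swap) (simp add: \<Psi>_sym)
      have hh: "(\<Sum>i\<in>UNIV. \<Sum>j\<in>UNIV. \<Psi> i j x * Wt (hc i) (hc j)) = 0"
      proof -
        have w: "Wt (hc i) (hc j) = (if i = j then 2 else 0) * vol x UNIV" for i j
        proof -
          have "wedge (H i) (H j) x UNIV = Wt (hc i) (hc j)" unfolding wedge_def Wt_def Hc ..
          then show ?thesis using HH[of i j] by simp
        qed
        have "(\<Sum>i\<in>UNIV. \<Sum>j\<in>UNIV. \<Psi> i j x * Wt (hc i) (hc j)) = (\<Sum>i\<in>UNIV. \<Psi> i i x * 2 * vol x UNIV)"
          unfolding w by (simp add: if_distrib[of "\<lambda>t. t * _"] if_distrib[of "\<lambda>t. _ * t"] mult.assoc cong: if_cong)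
        also have "\<dots> = 2 * vol x UNIV * (\<Sum>i\<in>UNIV. \<Psi> i i x)"
          by (simp add: sum_distrib_left algebra_simps)
        finally show ?thesis using \<Psi>_tracefree by simp
      qed
      have star: "(\<Sum>i\<in>UNIV. \<Sum>j\<in>UNIV. \<Psi> i j x * X i j) = trA * (\<Sum>i\<in>UNIV. \<Sum>j\<in>UNIV. \<Psi> i j x * c0 i j)"
      proof -
        have "2 * (\<Sum>i\<in>UNIV. \<Sum>j\<in>UNIV. \<Psi> i j x * X i j) = (\<Sum>i\<in>UNIV. \<Sum>j\<in>UNIV. \<Psi> i j x * X i j) + (\<Sum>i\<in>UNIV. \<Sum>j\<in>UNIV. \<Psi> i j x * X j i)"
          using sumsym[of X] by simp
        also have "\<dots> = (\<Sum>i\<in>UNIV. \<Sum>j\<in>UNIV. \<Psi> i j x * (X i j + X j i))"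
          by (simp add: sum.distrib distrib_left)
        also have "\<dots> = (\<Sum>i\<in>UNIV. \<Sum>j\<in>UNIV. \<Psi> i j x * (trA * (M\<^sup>2 * M\<^sup>2 * Wt (hc i) (hc j) + c0 i j + c0 j i)))"
          by (simp add: pair)
        also have "\<dots> = trA * (M\<^sup>2 * M\<^sup>2 * (\<Sum>i\<in>UNIV. \<Sum>j\<in>UNIV. \<Psi> i j x * Wt (hc i) (hc j))
              + (\<Sum>i\<in>UNIV. \<Sum>j\<in>UNIV. \<Psi> i j x * c0 i j) + (\<Sum>i\<in>UNIV. \<Sum>j\<in>UNIV. \<Psi> i j x * c0 j i))"
          by (simp add: sum.distrib sum_distrib_left algebra_simps)
        also have "\<dots> = trA * (2 * (\<Sum>i\<in>UNIV. \<Sum>j\<in>UNIV. \<Psi> i j x * c0 i j))"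
          using hh sumsym[of c0] by simp
        finally show ?thesis by simp
      qed
      have eta: "(\<Sum>i\<in>UNIV. \<Sum>j\<in>UNIV. (\<Sum>k\<in>UNIV. \<eta> x $ k * partial k (\<Psi> i j) x) * c0 i j + \<Psi> i j x * (\<Sum>k\<in>UNIV. \<eta> x $ k * Z k i j))
          = (\<Sum>k\<in>UNIV. \<eta> x $ k * (\<Sum>i\<in>UNIV. \<Sum>j\<in>UNIV. partial k (\<Psi> i j) x * c0 i j + \<Psi> i j x * Z k i j))"
      proof -
        have "(\<Sum>k\<in>UNIV. \<eta> x $ k * (\<Sum>i\<in>UNIV. \<Sum>j\<in>UNIV. partial k (\<Psi> i j) x * c0 i j + \<Psi> i j x * Z k i j))
            = (\<Sum>k\<in>UNIV. \<Sum>i\<in>UNIV. \<Sum>j\<in>UNIV. \<eta> x $ k * (partial k (\<Psi> i j) x * c0 i j + \<Psi> i j x * Z k i j))"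
          by (simp add: sum_distrib_left)
        also have "\<dots> = (\<Sum>i\<in>UNIV. \<Sum>k\<in>UNIV. \<Sum>j\<in>UNIV. \<eta> x $ k * (partial k (\<Psi> i j) x * c0 i j + \<Psi> i j x * Z k i j))"
          by (rule sum.swap)
        also have "\<dots> = (\<Sum>i\<in>UNIV. \<Sum>j\<in>UNIV. \<Sum>k\<in>UNIV. \<eta> x $ k * (partial k (\<Psi> i j) x * c0 i j + \<Psi> i j x * Z k i j))"
          by (rule sum.cong[OF refl], rule sum.swap)
        also have "\<dots> = (\<Sum>i\<in>UNIV. \<Sum>j\<in>UNIV. (\<Sum>k\<in>UNIV. \<eta> x $ k * partial k (\<Psi> i j) x) * c0 i j + \<Psi> i j x * (\<Sum>k\<in>UNIV. \<eta> x $ k * Z k i j))"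
          by (simp add: sum_distrib_left sum_distrib_right sum.distrib algebra_simps)
        finally show ?thesis by simp
      qed
      have "first_variation M H a \<Psi> \<delta>a \<delta>\<Psi> x UNIV
          = (\<Sum>i\<in>UNIV. \<Sum>j\<in>UNIV. \<Psi> i j x * X i j)
            + (\<Sum>i\<in>UNIV. \<Sum>j\<in>UNIV. (\<Sum>k\<in>UNIV. \<eta> x $ k * partial k (\<Psi> i j) x) * c0 i j + \<Psi> i j x * (\<Sum>k\<in>UNIV. \<eta> x $ k * Z k i j))"
      proof -
        have dps: "\<delta>\<Psi> i j x = (\<Sum>k\<in>UNIV. \<eta> x $ k * partial k (\<Psi> i j) x)" for i j
          unfolding \<delta>\<Psi>_def dPsi_eval ..
        show ?thesis unfolding LHS c1split dps by (simp add: sum.distrib algebra_simps)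
      qed
      also have "\<dots> = trA * ell x + (\<Sum>k\<in>UNIV. \<eta> x $ k * partial k ell x)"
        unfolding star eta ellx pell ..
      also have "\<dots> = extd (int_prod \<eta> (Lag M H a \<Psi>)) x UNIV"
        unfolding RHS trA_def A_def by (simp add: sum.distrib sum_distrib_right)
      finally show ?thesis using True by simp
    qed
  qed
qed

end
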